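(* Let $m,k,t,s$ be positive integers with $s<t<\lfloor\frac{m-1}{2}\rfloor$, and define $$c(x)=1+x^{t-s}+x^{s}+x^{t}+x^{t+s}+x^{m-(t-s)}+x^{m-s}+x^{m-t}+x^{m-(t+s)}\in\mathbb{F}_2[x]$$ (i.e. $c(x)=1+\sum_{j\in\{t-s,s,t,t+s\}}(x^j+x^{m-j})$, summing over the four listed values with multiplicity). Then $\gcd(c(x^k),x^m-1)=1$ if and only if $\gcd(m,3tk)=\gcd(m,tk)$ and $\gcd(m,3sk)=\gcd(m,sk)$.
   Context: All polynomials are over $\mathbb{F}_2$. *)

theory Defs
  imports "HOL-Computational_Algebra.Computational_Algebra" "HOL-Library.Z2"
begin

text \<open>Polynomials over F_2 are modelled as bit poly (bit is the two-element field of HOL-Library.Z2).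
  We equip bit with the standard (trivial) Euclidean/gcd structure of a field, exactly as
  Field_as_Ring does for real, rat and complex, so that the library gcd on bit poly is available.\<close>

lemma bit_mod_eq: "(a::bit) mod b = (if b = 0 then a else 0)"
  by (metis bit_not_one_iff div_mult_mod_eq mult_1_right mod_by_0 divide_bit_def add_0 mod_self)

instantiation bit ::
  "{unique_euclidean_ring, normalization_euclidean_semiring, normalization_semidom_multiplicative}"
begin

definition [simp]: "normalize_bit (x::bit) = (if x = 0 then 0 else 1::bit)"
definition [simp]: "unit_factor_bit (x::bit) = (x::bit)"
definition [simp]: "euclidean_size_bit (x::bit) = (if x = 0 then 0 else 1::nat)"
definition [simp]: "division_segment (x :: bit) = 1"

instance
  by standard (simp_all add: bit_mod_eq dvd_field_iff split: if_splits)

end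

instantiation bit :: euclidean_ring_gcd
begin

definition gcd_bit :: "bit \<Rightarrow> bit \<Rightarrow> bit" where
  "gcd_bit = Euclidean_Algorithm.gcd"
definition lcm_bit :: "bit \<Rightarrow> bit \<Rightarrow> bit" where
  "lcm_bit = Euclidean_Algorithm.lcm"
definition Gcd_bit :: "bit set \<Rightarrow> bit" where
 "Gcd_bit = Euclidean_Algorithm.Gcd"
definition Lcm_bit :: "bit set \<Rightarrow> bit" where
 "Lcm_bit = Euclidean_Algorithm.Lcm"

instance by standard (simp_all add: gcd_bit_def lcm_bit_def Gcd_bit_def Lcm_bit_def)

end

instance bit :: field_gcd ..

definition c_poly :: "nat \<Rightarrow> nat \<Rightarrow> nat \<Rightarrow> bit poly" where
  "c_poly m t s = 1 + (\<Sum>j\<leftarrow>[t - s, s, t, t + s]. monom 1 j + monom 1 (m - j))"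

end

theory Submission
  imports Defs
begin

lemma pow_sub1_dvd: "(a::'a::comm_ring_1) - 1 dvd a^r - 1"
proof (induction r)
  case 0 then show ?case by simp
next
  case (Suc r)
  have e: "a^(Suc r) - 1 = a*(a^r-1) + (a-1)" by (simp add: algebra_simps)
  show ?case by (subst e, rule dvd_add, rule dvd_mult, rule Suc, rule dvd_refl)
qed

lemma dvd_pow_mult: "(x::'a::comm_ring_1)^b - 1 dvd x^(b*q) - 1"
  using pow_sub1_dvd[of "x^b" q] by (simp add: power_mult)

lemma gcd_pow_dvd:
  fixes x d :: "'a::comm_ring_1"
  shows "d dvd x^a - 1 \<Longrightarrow> d dvd x^b - 1 \<Longrightarrow> d dvd x^(gcd a b) - 1"
proof (induction a b rule: gcd_nat_induct)
  case (base m) then show ?case by simp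
next
  case (step a b)
  have e: "x^a - 1 = x^(a mod b)*(x^(b*(a div b)) - 1) + (x^(a mod b) - 1)"
  proof -
    have "x^a = x^(a mod b) * x^(b*(a div b))"
      by (metis power_add mod_mult_div_eq)
    then show ?thesis by (simp add: algebra_simps)
  qed
  have "d dvd x^(b*(a div b)) - 1" using step(4) dvd_pow_mult dvd_trans by blast
  then have "d dvd x^(a mod b)*(x^(b*(a div b)) - 1)" by simp
  then have "d dvd x^(a mod b) - 1" using step(3) e by (metis dvd_add_right_iff)
  then have "d dvd x^(gcd b (a mod b)) - 1" using step by blast
  then show ?case by (metis gcd_red_nat)
qed

lemma two0: "(1+1::bit poly) = 0"
proof -
  have "(1+1::bit poly) = [:1+1:]" by (simp add: one_pCons)
  also have "... = 0" by simp
  finally show ?thesis .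
qed

lemma coprime_cong:
  fixes a b f :: "bit poly"
  assumes "f dvd a - b"
  shows "coprime a f \<longleftrightarrow> coprime b f"
proof
  assume h: "coprime a f"
  show "coprime b f"
  proof (rule coprimeI)
    fix d assume "d dvd b" "d dvd f"
    moreover have "d dvd a - b" using assms \<open>d dvd f\<close> dvd_trans by blast
    ultimately have "d dvd (a - b) + b" by (intro dvd_add)
    then have "d dvd a" by simp
    then show "is_unit d" using h \<open>d dvd f\<close> coprime_common_divisor by blast
  qed
next
  assume h: "coprime b f"
  show "coprime a f"
  proof (rule coprimeI)
    fix d assume "d dvd a" "d dvd f"
    moreover have "d dvd a - b" using assms \<open>d dvd f\<close> dvd_trans by blast
    have "d dvd a - (a - b)" using \<open>d dvd a\<close> \<open>d dvd a - b\<close> by (rule dvd_diff)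
    then have "d dvd b" by simp
    then show "is_unit d" using h \<open>d dvd f\<close> coprime_common_divisor by blast
  qed
qed

lemma X_pow: "([:0,1:]::bit poly)^n = monom 1 n"
  by (simp add: monom_altdef)

lemma D_not_unit:
  assumes "g > 0"
  shows "\<not> is_unit (([:0,1:]::bit poly)^(2*g) + [:0,1:]^g + 1)"
proof
  let ?D = "([:0,1:]::bit poly)^(2*g) + [:0,1:]^g + 1"
  assume u: "is_unit ?D"
  have c: "coeff ?D (2*g) = 1" using assms by (simp add: X_pow coeff_monom)
  then have "?D \<noteq> 0" by (metis coeff_0 one_neq_zero)
  moreover have "2*g \<le> degree ?D" using c by (intro le_degree) simp
  moreover have "degree ?D = 0" using is_unit_iff_degree[OF calculation(1)] u by blast
  ultimately show False using assms by linarith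
qed

lemma key:
  fixes n m :: nat
  assumes n: "n > 0" and m: "m > 0"
  shows "coprime (([:0,1:]::bit poly)^(2*n) + [:0,1:]^n + 1) ([:0,1:]^m - 1)
         \<longleftrightarrow> gcd m (3*n) = gcd m n"
proof -
  define X :: "bit poly" where "X = [:0,1:]"
  define z where "z = X^n"
  define Y where "Y = X^(2*n) + X^n + 1"
  define g where "g = gcd m n"
  have g0: "g > 0" using m by (simp add: g_def)
  have Yz: "Y = z^2 + z + 1" by (simp add: Y_def z_def power_mult mult.commute)
  show ?thesis unfolding X_def[symmetric] Y_def[symmetric]
  proof
    assume cop: "coprime Y (X^m - 1)"
    show "gcd m (3*n) = gcd m n"
    proof (rule ccontr)
      assume ne: "gcd m (3*n) \<noteq> gcd m n"
      define G where "G = gcd m (3*n)"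
      have "g dvd G" unfolding g_def G_def
        by (intro gcd_greatest) (auto intro: dvd_trans[OF gcd_dvd2])
      then obtain r where r: "G = g*r" by blast
      have "G dvd gcd (3*m) (3*n)" unfolding G_def
        by (intro gcd_greatest) (auto intro: dvd_trans[OF gcd_dvd1])
      also have "gcd (3*m) (3*n) = 3*g" unfolding g_def by (simp add: gcd_mult_distrib_nat)
      finally have "g*r dvd g*3" using r by (simp add: mult.commute)
      then have "r dvd 3" using g0 by simp
      then have "r \<le> 3" by (auto intro: dvd_imp_le)
      moreover have "r \<noteq> 0" using \<open>r dvd 3\<close> by (metis dvd_0_left_iff zero_neq_numeral)
      moreover have "r \<noteq> 1" using ne r G_def g_def by auto
      moreover have "r \<noteq> 2" using \<open>r dvd 3\<close> by auto
      ultimately have r3: "r = 3" by linarith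
      have "G dvd m" unfolding G_def by simp
      then have m3: "g*3 dvd m" using r r3 by simp
      obtain q where q: "n = g*q" unfolding g_def by (metis gcd_dvd2 dvdE)
      have q3: "q mod 3 \<noteq> 0"
      proof
        assume "q mod 3 = 0"
        then have "g*3 dvd n" using q by auto
        then have "g*3 dvd g" using m3 unfolding g_def by simp
        then have "g*3 \<le> g" using g0 by (intro dvd_imp_le)
        then show False using g0 by linarith
      qed
      define w where "w = X^g"
      define D where "D = w^2 + w + 1"
      have Dw3: "D dvd w^3 - 1"
      proof -
        have "w^3 - 1 = (w - 1)*D" by (simp add: D_def algebra_simps power2_eq_square power3_eq_cube)
        then show ?thesis by simp
      qed
      have "D dvd X^m - 1"
      proof -
        obtain l where "m = (g*3)*l" using m3 by blast
        then have "w^3 - 1 dvd X^m - 1" using dvd_pow_mult[of X "g*3" l]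
          by (simp add: w_def power_mult)
        then show ?thesis using Dw3 dvd_trans by blast
      qed
      moreover have "D dvd Y"
      proof -
        define u where "u = w^(3*(q div 3))"
        have Du: "D dvd u - 1" unfolding u_def
          using Dw3 dvd_pow_mult[of w 3 "q div 3"] dvd_trans by blast
        have Du2: "D dvd u^2 - 1"
          using Du pow_sub1_dvd[of u 2] dvd_trans by blast
        have gq: "g*q = g*(3*(q div 3)) + g*(q mod 3)"
          by (metis add_mult_distrib2 mult_div_mod_eq)
        have wq: "X^n = u * w^(q mod 3)"
          unfolding u_def w_def q gq power_add power_mult ..
        have wq2: "X^(2*n) = u^2 * w^(2*(q mod 3))"
        proof -
          have "X^(2*n) = (X^n)^2" by (simp add: power_mult mult.commute)
          also have "... = u^2 * w^(2*(q mod 3))" unfolding wq power_mult_distrib power_mult[symmetric]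
            by (simp add: mult.commute)
          finally show ?thesis .
        qed
        have "q mod 3 = 1 \<or> q mod 3 = 2" using q3 by linarith
        then show ?thesis
        proof
          assume h: "q mod 3 = 1"
          have "Y = w^2*(u^2-1) + w*(u-1) + D"
            unfolding Y_def wq wq2 h D_def by (simp add: algebra_simps power2_eq_square)
          then show ?thesis using Du Du2 by simp
        next
          assume h: "q mod 3 = 2"
          have "Y = w^4*(u^2-1) + w^2*(u-1) + w*(w^3-1) + D"
            unfolding Y_def wq wq2 h D_def by (simp add: algebra_simps power_numeral_reduce)
          then show ?thesis using Du Du2 Dw3 by simp
        qed
      qed
      moreover have "\<not> is_unit D" using D_not_unit[OF g0]
        by (simp add: D_def w_def X_def power_mult mult.commute)
      ultimately show False using cop coprime_common_divisor by blast
    qed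
  next
    assume eq: "gcd m (3*n) = gcd m n"
    show "coprime Y (X^m - 1)"
    proof (rule coprimeI)
      fix d assume dY: "d dvd Y" and df: "d dvd X^m - 1"
      have "X^(3*n) - 1 = (z - 1) * Y"
        by (simp add: Yz z_def power_mult mult.commute algebra_simps power2_eq_square power3_eq_cube)
      then have "d dvd X^(3*n) - 1" using dY by simp
      then have "d dvd X^(gcd (3*n) m) - 1" using gcd_pow_dvd df by blast
      then have d1: "d dvd X^g - 1" using eq by (simp add: g_def gcd.commute)
      obtain q where "n = g*q" unfolding g_def by (metis gcd_dvd2 dvdE)
      then have "X^g - 1 dvd z - 1" using dvd_pow_mult z_def by blast
      then have dz: "d dvd z - 1" using d1 dvd_trans by blast
      have "Y = (z-1)*(z+1+1) + (1+1+1)" by (simp add: Yz algebra_simps power2_eq_square)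
      also have "(1+1+1::bit poly) = 1" using two0 by (simp add: add.assoc)
      finally have "1 = Y - (z-1)*(z+1+1)" by simp
      moreover have "d dvd Y - (z-1)*(z+1+1)" by (rule dvd_diff[OF dY dvd_mult2[OF dz]])
      ultimately show "is_unit d" by simp
    qed
  qed
qed

lemma pcompose_Xpow: "pcompose (([:0,1:]::bit poly)^j) q = q^j"
proof (induction j)
  case 0 then show ?case by (simp add: pcompose_1)
next
  case (Suc j)
  have "pcompose ([:0,1:]::bit poly) q = q" by (simp add: pcompose_pCons)
  then show ?case using Suc by (simp only: power_Suc pcompose_mult)
qed

lemma coprime_X:
  assumes "m > 0"
  shows "coprime ([:0,1:]::bit poly) ([:0,1:]^m - 1)"
proof (rule coprimeI)
  fix d assume d1: "d dvd ([:0,1:]::bit poly)" and d2: "d dvd [:0,1:]^m - 1"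
  have "([:0,1:]::bit poly) dvd [:0,1:]^m" using assms by (simp add: dvd_power)
  then have "d dvd [:0,1:]^m" using d1 dvd_trans by blast
  then have "d dvd [:0,1:]^m - ([:0,1:]^m - 1)" using d2 by (rule dvd_diff)
  then show "is_unit d" by simp
qed

theorem proposition2:
  fixes m k t s :: nat
  assumes "m > 0" "k > 0" "t > 0" "s > 0"
    and "s < t" "t < (m - 1) div 2"
  shows "gcd (pcompose (c_poly m t s) (monom 1 k)) (monom 1 m - 1) = 1
     \<longleftrightarrow> gcd m (3 * t * k) = gcd m (t * k) \<and> gcd m (3 * s * k) = gcd m (s * k)"
proof -
  define X :: "bit poly" where "X = [:0,1:]"
  define y where "y = X^k"
  define f where "f = X^m - 1"
  define a where "a = y^t"
  define b where "b = y^s"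
  define u where "u = y^m"
  define C where "C = pcompose (c_poly m t s) (monom 1 k)"
  define P where "P = a^2 + a + 1"
  define Q where "Q = b^2 + b + 1"
  have tsm: "t + s \<le> m" using assms by linarith
  have Ce: "C = 1 + ((y^(t-s) + y^(m-(t-s))) + ((y^s + y^(m-s)) + ((y^t+y^(m-t)) + (y^(t+s)+y^(m-(t+s))))))"
    unfolding C_def c_poly_def y_def X_def
    by (simp add: pcompose_add pcompose_1 X_pow[symmetric] pcompose_Xpow)
  have e1: "a*b*y^(t-s) = a*a"
  proof -
    have "a*b*y^(t-s) = y^(t+(s+(t-s)))" by (simp add: a_def b_def power_add mult.assoc)
    also have "t+(s+(t-s)) = t+t" using assms by simp
    finally show ?thesis by (simp add: a_def power_add)
  qed
  have e2: "a*b*y^(m-(t-s)) = u*b*b"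
  proof -
    have "a*b*y^(m-(t-s)) = y^(t+(s+(m-(t-s))))" by (simp add: a_def b_def power_add mult.assoc)
    also have "t+(s+(m-(t-s))) = m+(s+s)" using assms tsm by simp
    finally show ?thesis by (simp add: u_def b_def power_add mult.assoc)
  qed
  have e3: "a*b*y^(m-s) = u*a"
  proof -
    have "a*b*y^(m-s) = y^(t+(s+(m-s)))" by (simp add: a_def b_def power_add mult.assoc)
    also have "t+(s+(m-s)) = m+t" using assms tsm by simp
    finally show ?thesis by (simp add: u_def a_def power_add mult.assoc)
  qed
  have e4: "a*b*y^(m-t) = u*b"
  proof -
    have "a*b*y^(m-t) = y^(t+(s+(m-t)))" by (simp add: a_def b_def power_add mult.assoc)
    also have "t+(s+(m-t)) = m+s" using assms tsm by simp
    finally show ?thesis by (simp add: u_def b_def power_add mult.assoc)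
  qed
  have e5: "a*b*y^(m-(t+s)) = u"
  proof -
    have "a*b*y^(m-(t+s)) = y^(t+(s+(m-(t+s))))" by (simp add: a_def b_def power_add mult.assoc)
    also have "t+(s+(m-(t+s))) = m" using assms tsm by simp
    finally show ?thesis by (simp add: u_def)
  qed
  have e6: "y^(t+s) = a*b" by (simp add: a_def b_def power_add)
  have diff: "a*b*C - P*Q = (u-1)*(b*b+a+b+1)"
  proof -
    have "a*b*C = a*b + a*b*y^(t-s) + a*b*y^(m-(t-s)) + a*b*b + a*b*y^(m-s) + a*b*a
        + a*b*y^(m-t) + a*b*(a*b) + a*b*y^(m-(t+s))"
      unfolding Ce e6 b_def[symmetric] a_def[symmetric] by (simp add: algebra_simps)
    also have "... = a*b + a*a + u*b*b + a*b*b + u*a + a*b*a + u*b + a*b*(a*b) + u"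
      unfolding e1 e2 e3 e4 e5 ..
    finally show ?thesis unfolding P_def Q_def by (simp add: algebra_simps power2_eq_square)
  qed
  have fu: "f dvd u - 1" unfolding f_def u_def y_def
    using dvd_pow_mult[of X m k] by (simp add: power_mult[symmetric] mult.commute)
  have fd: "f dvd a*b*C - P*Q" unfolding diff using fu by simp
  have cab: "coprime (a*b) f" unfolding a_def b_def y_def f_def X_def
    using coprime_X[OF assms(1)] by simp
  have "gcd C f = 1 \<longleftrightarrow> coprime C f" by (simp add: coprime_iff_gcd_eq_1)
  also have "... \<longleftrightarrow> coprime (a*b*C) f" using cab by simp
  also have "... \<longleftrightarrow> coprime (P*Q) f" by (rule coprime_cong[OF fd])
  also have "... \<longleftrightarrow> coprime P f \<and> coprime Q f" by simp
  also have "coprime P f \<longleftrightarrow> gcd m (3*(k*t)) = gcd m (k*t)"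
  proof -
    have "P = X^(2*(k*t)) + X^(k*t) + 1" unfolding P_def a_def y_def
      by (simp add: power_mult[symmetric] mult.commute)
    then show ?thesis unfolding f_def X_def using key[of "k*t" m] assms by simp
  qed
  also have "coprime Q f \<longleftrightarrow> gcd m (3*(k*s)) = gcd m (k*s)"
  proof -
    have "Q = X^(2*(k*s)) + X^(k*s) + 1" unfolding Q_def b_def y_def
      by (simp add: power_mult[symmetric] mult.commute)
    then show ?thesis unfolding f_def X_def using key[of "k*s" m] assms by simp
  qed
  finally show ?thesis unfolding C_def f_def X_def X_pow by (simp add: mult_ac)
qed

end
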